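(* Let $q$ be a prime power and $d$ an integer with $5\le d\le q$. Let $\mathcal C$ be the $[q+1,q+2-d,d]_q$ normalized GDRS code and let $\mathcal V^{(2)}$ be a coset of weight $2$ of $\mathcal C$ with coset leader $\mathbf v_2(j_1,j_2;\gamma_1,\gamma_2)$, $\gamma_1,\gamma_2\in\mathbb F_q^*$. Then the number $B_{d-2}(\mathcal V^{(2)})$ of vectors of weight $d-2$ in $\mathcal V^{(2)}$ does not depend on the positions $j_1,j_2$ and equals $\mathrm P^\times_{q,d-2}(-\gamma_2/\gamma_1)$.
   Context: Normalized GDRS code: the $\mathbb F_q$-linear code of length $q+1$ which is the kernel of the $(d-1)\times(q+1)$ parity check matrix whose first $q$ columns are $(1,m,m^2,\dots,m^{d-2})^{T}$ for $m$ running over all elements of $\mathbb F_q$ (nonzero ones first, then $0$) and whose last column is $(0,\dots,0,1)^{T}$. A coset of weight $W$ is a coset $\mathbf v+\mathcal C$ whose minimum Hamming weight is $W$; a coset leader is a vector of minimum weight in it. $\mathbf v_2(j_1,j_2;\gamma_1,\gamma_2)$ is the vector of $\mathbb F_q^{q+1}$ with $\gamma_1,\gamma_2$ in positions $j_1\ne j_2$ and zeros elsewhere. For $\mu<q-1$ and $\gamma\in\mathbb F_q^*$, $\mathrm P^\times_{q,\mu}(\gamma)$ is the number of $\mu$-element subsets $\{\alpha_1,\dots,\alpha_\mu\}\subset\mathbb F_q^*$ (distinct elements) whose product is $\gamma$. *)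

theory Defs
  imports Main
begin

text \<open>Coordinates of \<open>F_q^(q+1)\<close> are indexed by \<open>'a option\<close>:
  position \<open>Some m\<close> is the column \<open>(1,m,...,m^(d-2))^T\<close> of the parity check
  matrix, position \<open>None\<close> is the last column \<open>(0,...,0,1)^T\<close>.\<close>

type_synonym 'a vec = "'a option \<Rightarrow> 'a"

definition hwt :: "('a::zero) vec \<Rightarrow> nat" where
  "hwt x = card {j. x j \<noteq> 0}"

definition gdrs_code :: "nat \<Rightarrow> ('a::{finite,field}) vec set" where
  "gdrs_code d = {c. \<forall>i < d - 1.
      (\<Sum>m\<in>UNIV. c (Some m) * m ^ i) + (if i = d - 2 then c None else 0) = 0}"

definition coset :: "('a::plus) vec \<Rightarrow> 'a vec set \<Rightarrow> 'a vec set" where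
  "coset v C = {(\<lambda>j. v j + c j) | c. c \<in> C}"

definition coset_weight :: "('a::zero) vec set \<Rightarrow> nat" where
  "coset_weight V = Min (hwt ` V)"

definition vec2 :: "'a option \<Rightarrow> 'a option \<Rightarrow> 'a \<Rightarrow> 'a \<Rightarrow> ('a::zero) vec" where
  "vec2 j1 j2 g1 g2 = (\<lambda>j. if j = j1 then g1 else if j = j2 then g2 else 0)"

definition B_count :: "nat \<Rightarrow> ('a::zero) vec set \<Rightarrow> nat" where
  "B_count w V = card {x \<in> V. hwt x = w}"

definition P_times :: "nat \<Rightarrow> 'a::{finite,field} \<Rightarrow> nat" where
  "P_times mu g = card {S. S \<subseteq> {x::'a. x \<noteq> 0} \<and> card S = mu \<and> \<Prod>S = g}"

end

theory Submission imports Defs "HOL-Computational_Algebra.Polynomial" "HOL-Library.FuncSet" "HOL-Library.Cardinality"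
begin

definition rowf :: "nat \<Rightarrow> nat \<Rightarrow> ('a::{finite,field}) vec \<Rightarrow> 'a" where
 "rowf d i c = (\<Sum>m\<in>UNIV. c (Some m) * m ^ i) + (if i = d - 2 then c None else 0)"

lemma code_iff: "c \<in> gdrs_code d \<longleftrightarrow> (\<forall>i<d-1. rowf d i c = 0)"
  by (simp add: gdrs_code_def rowf_def)

lemma rowf_diff: "rowf d i (\<lambda>j. x j - y j) = rowf d i x - rowf d i y"
  by (simp add: rowf_def algebra_simps sum_subtractf)

lemma test_poly:
  fixes c :: "('a::{finite,field}) vec"
  assumes "c \<in> gdrs_code d" "degree f \<le> d - 2" "d \<ge> 2"
  shows "(\<Sum>m\<in>UNIV. c (Some m) * poly f m) + coeff f (d-2) * c None = 0"
proof -
  have pf: "poly f m = (\<Sum>i<d-1. coeff f i * m^i)" for m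
  proof -
    have "poly f m = (\<Sum>i\<le>degree f. coeff f i * m^i)" by (rule poly_altdef)
    also have "\<dots> = (\<Sum>i<d-1. coeff f i * m^i)"
      apply (rule sum.mono_neutral_left) using assms by (auto simp: coeff_eq_0)
    finally show ?thesis .
  qed
  have "(\<Sum>m\<in>UNIV. c (Some m) * poly f m) = (\<Sum>m\<in>UNIV. \<Sum>i<d-1. coeff f i * (c (Some m) * m^i))"
    by (simp add: pf sum_distrib_left mult_ac)
  also have "\<dots> = (\<Sum>i<d-1. coeff f i * (\<Sum>m\<in>UNIV. c (Some m) * m^i))"
    by (subst sum.swap) (simp add: sum_distrib_left)
  finally have 1: "(\<Sum>m\<in>UNIV. c (Some m) * poly f m) = (\<Sum>i<d-1. coeff f i * (\<Sum>m\<in>UNIV. c (Some m) * m^i))" .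
  have 2: "coeff f (d-2) * c None = (\<Sum>i<d-1. coeff f i * (if i = d-2 then c None else 0))"
    using assms(3) by (simp add: if_distrib cong: if_cong)
  have "(\<Sum>m\<in>UNIV. c (Some m) * poly f m) + coeff f (d-2) * c None
     = (\<Sum>i<d-1. coeff f i * rowf d i c)"
    unfolding 1 2 rowf_def by (simp add: sum.distrib distrib_left)
  also have "\<dots> = 0" using assms(1) by (simp add: code_iff)
  finally show ?thesis .
qed

lemma monic_prod:
  fixes K :: "'a::field set"
  assumes "finite K"
  shows "degree (\<Prod>k\<in>K. [:-k,1:]) = card K \<and> coeff (\<Prod>k\<in>K. [:-k,1:]) (card K) = 1"
  using assms
proof (induction K rule: finite_induct)
  case empty then show ?case by simp
next
  case (insert x F)
  define p where "p = (\<Prod>k\<in>F. [:-k,1:])"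
  have p0: "p \<noteq> 0" using insert unfolding p_def by auto
  have l1: "degree [:-x,1:] = 1" "lead_coeff [:-x,1:] = 1" by auto
  have d: "degree ([:-x,1:] * p) = card F + 1" using insert p0 l1
    by (subst degree_mult_eq) (auto simp: p_def)
  have "lead_coeff ([:-x,1:] * p) = lead_coeff [:-x,1:] * lead_coeff p" by (rule lead_coeff_mult)
  then have "lead_coeff ([:-x,1:] * p) = 1" using insert l1 by (simp add: p_def)
  then have "coeff ([:-x,1:] * p) (card F + 1) = 1" using d by simp
  moreover have "(\<Prod>k\<in>insert x F. [:-k,1:]) = [:-x,1:] * p" using insert by (simp add: p_def)
  ultimately show ?case using insert d by simp
qed

lemma poly_lin_prod: "poly (\<Prod>k\<in>K. [:-k,1:]) m = (\<Prod>k\<in>K. m - (k::'a::field))"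
  by (simp add: poly_prod)

lemma poly_lin_prod0: "finite K \<Longrightarrow> (poly (\<Prod>k\<in>K. [:-k,1:]) m = 0) = (m \<in> (K::'a::field set))"
  by (simp add: poly_prod)

lemma sum_single_UNIV:
  fixes g :: "'b::finite \<Rightarrow> 'a::comm_monoid_add"
  assumes "\<And>m. m \<noteq> a \<Longrightarrow> g m = 0"
  shows "(\<Sum>m\<in>UNIV. g m) = g a"
proof -
  have "(\<Sum>m\<in>UNIV. g m) = g a + (\<Sum>m\<in>UNIV-{a}. g m)" by (rule sum.remove) auto
  also have "(\<Sum>m\<in>UNIV-{a}. g m) = 0" using assms by (intro sum.neutral) auto
  finally show ?thesis by simp
qed

lemma card_fin_part:
  fixes S :: "'a option set"
  assumes "finite S"
  shows "card {m. Some m \<in> S} + (if None \<in> S then 1 else 0) = card S"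
proof -
  have e: "S = Some ` {m. Some m \<in> S} \<union> (if None \<in> S then {None} else {})"
    by (rule set_eqI, case_tac x) auto
  have f: "finite {m. Some m \<in> S}" using assms by (metis finite_imageD inj_Some finite_subset subsetI e Un_upper1 inj_on_subset subset_UNIV)
  have "card S = card (Some ` {m. Some m \<in> S}) + card (if None \<in> S then {None} else ({}::'a option set))"
    by (subst e, rule card_Un_disjoint) (use f in auto)
  also have "card (Some ` {m. Some m \<in> S}) = card {m. Some m \<in> S}" by (rule card_image) simp
  finally show ?thesis by simp
qed

lemma min_dist:
  fixes c :: "('a::{finite,field}) vec"
  assumes C: "c \<in> gdrs_code d" and sup: "\<And>j. j \<notin> S \<Longrightarrow> c j = 0" and cS: "card S < d" and d2: "d \<ge> 2"
  shows "c j = 0"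
proof -
  define Sf where "Sf = {m. Some m \<in> S}"
  have cf: "card Sf + (if None \<in> S then 1 else 0) = card S" unfolding Sf_def by (rule card_fin_part) simp
  have fSf: "finite Sf" by simp
  show ?thesis
  proof (cases "j \<in> S")
    case False then show ?thesis using sup by simp
  next
    case jS: True
    show ?thesis
    proof (cases j)
      case (Some a)
      define f where "f = (\<Prod>k\<in>Sf-{a}. [:-k,1:])"
      have aS: "a \<in> Sf" using jS Some Sf_def by simp
      have degf: "degree f = card Sf - 1" using monic_prod[of "Sf-{a}"] aS by (simp add: f_def)
      have "degree f \<le> d - 2" using degf cf cS by auto
      from test_poly[OF C this d2]
      have T: "(\<Sum>m\<in>UNIV. c (Some m) * poly f m) + coeff f (d-2) * c None = 0" .
      have z1: "coeff f (d-2) * c None = 0"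
      proof (cases "None \<in> S")
        case True
        have "0 < card Sf" using aS fSf card_gt_0_iff by blast
        then have "degree f < d - 2" using True degf cf cS aS by (auto split: if_splits)
        then show ?thesis by (simp add: coeff_eq_0)
      next
        case False then show ?thesis using sup by simp
      qed
      have z2: "(\<Sum>m\<in>UNIV. c (Some m) * poly f m) = c (Some a) * poly f a"
      proof (rule sum_single_UNIV)
        fix m assume "m \<noteq> a"
        then show "c (Some m) * poly f m = 0"
          using sup[of "Some m"] poly_lin_prod0[of "Sf-{a}" m] by (auto simp: f_def Sf_def)
      qed
      have "poly f a \<noteq> 0" using poly_lin_prod0[of "Sf-{a}" a] by (simp add: f_def)
      then show ?thesis using T z1 z2 Some by simp
    next
      case None
      define f where "f = [:0,1:] ^ (d - 2 - card Sf) * (\<Prod>k\<in>Sf. [:-k,1:])"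
      have mp: "degree (\<Prod>k\<in>Sf. [:-k,1:]) = card Sf" "lead_coeff (\<Prod>k\<in>Sf. [:-(k::'a),1:]) = 1"
        using monic_prod[of Sf] by auto
      have le: "card Sf \<le> d - 2" using cf cS jS None by auto
      have dp: "degree ([:0,1:] ^ (d - 2 - card Sf) :: 'a poly) = d - 2 - card Sf"
        by (rule degree_linear_power)
      have lp: "lead_coeff ([:0,1:] ^ (d - 2 - card Sf) :: 'a poly) = 1"
        by (simp add: lead_coeff_power)
      have ne: "([:0,1:] ^ (d - 2 - card Sf) :: 'a poly) \<noteq> 0" "(\<Prod>k\<in>Sf. [:-(k::'a),1:]) \<noteq> 0"
        using lp mp by auto
      have degf: "degree f = d - 2" unfolding f_def using ne dp mp le by (subst degree_mult_eq) auto
      have "lead_coeff f = 1" unfolding f_def lead_coeff_mult using lp mp by simp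
      then have cf1: "coeff f (d-2) = 1" using degf by simp
      from test_poly[OF C _ d2, of f] degf
      have T: "(\<Sum>m\<in>UNIV. c (Some m) * poly f m) + coeff f (d-2) * c None = 0" by simp
      have "(\<Sum>m\<in>UNIV. c (Some m) * poly f m) = 0"
      proof (rule sum.neutral, clarify)
        fix m
        show "c (Some m) * poly f m = 0"
          using sup[of "Some m"] poly_lin_prod0[of Sf m] by (auto simp: f_def Sf_def)
      qed
      then show ?thesis using T cf1 None by simp
    qed
  qed
qed

lemma exist_sol:
  fixes w :: "('a::{finite,field}) vec"
  assumes cS: "card S = d - 1" and d2: "d \<ge> 2"
  shows "\<exists>y. (\<forall>j. j \<notin> S \<longrightarrow> y j = 0) \<and> (\<lambda>j. y j - w j) \<in> gdrs_code d"
proof -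
  define emb where "emb = (\<lambda>(f::'a option \<Rightarrow> 'a) j. if j \<in> S then f j else 0)"
  define Y where "Y = emb ` (S \<rightarrow>\<^sub>E (UNIV::'a set))"
  define syn where "syn = (\<lambda>y::'a vec. restrict (\<lambda>i. rowf d i y) {..<d-1})"
  define Tg where "Tg = ({..<d-1} \<rightarrow>\<^sub>E (UNIV::'a set))"
  have ie: "inj_on emb (S \<rightarrow>\<^sub>E UNIV)"
  proof (rule inj_onI)
    fix f g assume f: "f \<in> S \<rightarrow>\<^sub>E (UNIV::'a set)" and g: "g \<in> S \<rightarrow>\<^sub>E (UNIV::'a set)" and e: "emb f = emb g"
    show "f = g"
    proof (rule PiE_ext[OF f g])
      fix i assume "i \<in> S" then show "f i = g i" using fun_cong[OF e, of i] by (simp add: emb_def)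
    qed
  qed
  have cY: "card Y = CARD('a) ^ (d-1)"
    unfolding Y_def using ie cS by (simp add: card_image card_PiE)
  have cT: "card Tg = CARD('a) ^ (d-1)" unfolding Tg_def by (simp add: card_PiE)
  have Ysup: "y \<in> Y \<Longrightarrow> j \<notin> S \<Longrightarrow> y j = 0" for y j by (auto simp: Y_def emb_def)
  have isy: "inj_on syn Y"
  proof (rule inj_onI)
    fix y1 y2 assume y1: "y1 \<in> Y" and y2: "y2 \<in> Y" and e: "syn y1 = syn y2"
    have "(\<lambda>j. y1 j - y2 j) \<in> gdrs_code d"
      unfolding code_iff rowf_diff
    proof (intro allI impI)
      fix i assume "i < d - 1"
      then show "rowf d i y1 - rowf d i y2 = 0" using fun_cong[OF e, of i] by (simp add: syn_def)
    qed
    then have "y1 j - y2 j = 0" for j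
    proof (rule min_dist[where S=S])
      fix j assume "j \<notin> S" then show "y1 j - y2 j = 0" using Ysup[OF y1] Ysup[OF y2] by simp
    qed (use cS d2 in auto)
    then show "y1 = y2" by auto
  qed
  have sub: "syn ` Y \<subseteq> Tg" by (auto simp: syn_def Tg_def split: if_splits)
  have "card (syn ` Y) = card Tg" using card_image[OF isy] cY cT by simp
  then have eq: "syn ` Y = Tg" using sub by (intro card_subset_eq) (auto simp: Tg_def intro!: finite_PiE)
  have "syn w \<in> Tg" by (simp add: syn_def Tg_def)
  then obtain y where y: "y \<in> Y" "syn y = syn w" using eq by auto
  have "(\<lambda>j. y j - w j) \<in> gdrs_code d"
    unfolding code_iff rowf_diff
  proof (intro allI impI)
    fix i assume "i < d - 1"
    then show "rowf d i y - rowf d i w = 0" using fun_cong[OF y(2), of i] by (simp add: syn_def)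
  qed
  then show ?thesis using y Ysup by blast
qed

lemma coset_mem:
  fixes v :: "('a::{finite,field}) vec"
  shows "x \<in> coset v (gdrs_code d) \<longleftrightarrow> (\<forall>i<d-1. rowf d i x = rowf d i v)"
proof -
  have "x \<in> coset v (gdrs_code d) \<longleftrightarrow> (\<lambda>j. x j - v j) \<in> gdrs_code d"
  proof
    assume "x \<in> coset v (gdrs_code d)"
    then obtain c where "c \<in> gdrs_code d" "x = (\<lambda>j. v j + c j)" by (auto simp: coset_def)
    then show "(\<lambda>j. x j - v j) \<in> gdrs_code d" by simp
  next
    assume "(\<lambda>j. x j - v j) \<in> gdrs_code d"
    then show "x \<in> coset v (gdrs_code d)" unfolding coset_def
      by (intro CollectI exI[of _ "\<lambda>j. x j - v j"]) auto
  qed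
  then show ?thesis by (simp add: code_iff rowf_diff)
qed

lemma general:
  fixes g1 g2 :: "'a::{finite,field}" and \<phi> :: "'a option \<Rightarrow> 'a"
  assumes d5: "5 \<le> d" and j12: "j1 \<noteq> j2" and g1: "g1 \<noteq> 0" and g2: "g2 \<noteq> 0"
    and bij: "bij_betw \<phi> (UNIV - {j1,j2}) {x. x \<noteq> 0}"
    and H: "\<And>c T. c \<in> gdrs_code d \<Longrightarrow> T \<inter> {j1,j2} = {} \<Longrightarrow> card T = d-2
       \<Longrightarrow> (\<And>j. j \<notin> T \<Longrightarrow> j \<noteq> j1 \<Longrightarrow> j \<noteq> j2 \<Longrightarrow> c j = 0) \<Longrightarrow> c j2 = -g2
       \<Longrightarrow> (c j1 = -g1 \<longleftrightarrow> prod \<phi> T = -g2/g1)"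
  shows "B_count (d-2) (coset (vec2 j1 j2 g1 g2) (gdrs_code d)) = P_times (d-2) (-g2/g1)"
proof -
  define v where "v = vec2 j1 j2 g1 g2"
  define C where "C = (gdrs_code d :: 'a vec set)"
  define V where "V = coset v C"
  define A where "A = {x\<in>V. hwt x = d-2}"
  define g where "g = -g2/g1"
  define P where "P = {S. S \<subseteq> {x::'a. x \<noteq> 0} \<and> card S = d-2 \<and> \<Prod>S = g}"
  define R where "R = UNIV - {j1,j2}"
  define supp where "supp = (\<lambda>x::'a vec. {j. x j \<noteq> 0})"
  have d2: "d \<ge> 2" using d5 by simp
  have hwt_supp: "hwt x = card (supp x)" for x by (simp add: hwt_def supp_def)
  have memV: "x \<in> V \<longleftrightarrow> (\<lambda>j. x j - v j) \<in> C" for x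
    unfolding V_def C_def coset_mem code_iff rowf_diff by simp
  have v1: "v j1 = g1" and v2: "v j2 = g2" and v0: "j \<noteq> j1 \<Longrightarrow> j \<noteq> j2 \<Longrightarrow> v j = 0" for j
    using j12 by (auto simp: v_def vec2_def)
  have suppv: "supp v = {j1,j2}" using v1 v2 v0 g1 g2 by (auto simp: supp_def)
  have injphi: "inj_on \<phi> R" using bij by (simp add: bij_betw_def R_def)
  have imphi: "\<phi> ` R = {x. x \<noteq> 0}" using bij by (simp add: bij_betw_def R_def)
  have pa: "supp x \<subseteq> R \<and> card (supp x) = d-2 \<and> prod \<phi> (supp x) = g" if xA: "x \<in> A" for x
  proof -
    have xV: "(\<lambda>j. x j - v j) \<in> C" and hx: "card (supp x) = d-2"
      using xA by (auto simp: A_def memV hwt_supp)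
    have disj: "supp x \<inter> {j1,j2} = {}"
    proof (rule ccontr)
      assume ne: "supp x \<inter> {j1,j2} \<noteq> {}"
      have "card (supp x \<union> {j1,j2}) + card (supp x \<inter> {j1,j2}) = card (supp x) + card {j1,j2}"
        using card_Un_Int[of "supp x" "{j1,j2}"] by simp
      moreover have "card (supp x \<inter> {j1,j2}) > 0" using ne by (simp add: card_gt_0_iff)
      ultimately have cl: "card (supp x \<union> {j1,j2}) < d" using hx j12 d5 by simp
      have z: "x j - v j = 0" for j
        by (rule min_dist[OF xV[unfolded C_def] _ cl d2]) (use v0 in \<open>auto simp: supp_def\<close>)
      then have "x = v" by auto
      then have "card (supp x) = 2" using suppv j12 by simp
      then show False using hx d5 by simp
    qed
    have "(x j1 - v j1 = -g1) \<longleftrightarrow> prod \<phi> (supp x) = -g2/g1"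
    proof (rule H[OF xV[unfolded C_def] disj hx])
      fix j assume "j \<notin> supp x" "j \<noteq> j1" "j \<noteq> j2" then show "x j - v j = 0" using v0 by (simp add: supp_def)
    next
      show "x j2 - v j2 = - g2" using disj v2 by (auto simp: supp_def)
    qed
    moreover have "x j1 - v j1 = -g1" using disj v1 by (auto simp: supp_def)
    ultimately show ?thesis using disj hx by (auto simp: R_def g_def)
  qed
  have pb: "x = y" if "x \<in> A" "y \<in> A" "supp x = supp y" for x y
  proof -
    have "\<forall>i<d-1. rowf d i x = rowf d i v" "\<forall>i<d-1. rowf d i y = rowf d i v"
      using that by (auto simp: A_def V_def C_def coset_mem)
    then have xy: "(\<lambda>j. x j - y j) \<in> gdrs_code d" by (simp add: code_iff rowf_diff)
    have cs: "card (supp x) < d" using pa[OF that(1)] d5 by simp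
    have "x j - y j = 0" for j
    proof (rule min_dist[OF xy _ cs d2])
      fix j assume "j \<notin> supp x"
      moreover then have "j \<notin> supp y" using that(3) by simp
      ultimately show "x j - y j = 0" by (simp add: supp_def)
    qed
    then show ?thesis by auto
  qed
  have pc: "\<exists>x\<in>A. supp x = T" if TR: "T \<subseteq> R" and cT: "card T = d-2" and pT: "prod \<phi> T = g" for T
  proof -
    have j1T: "j1 \<notin> T" and j2T: "j2 \<notin> T" using TR by (auto simp: R_def)
    have cS: "card (insert j1 T) = d - 1" using j1T cT d5 by simp
    define w where "w = (\<lambda>j. if j = j2 then g2 else 0)"
    obtain y where y0: "\<forall>j. j \<notin> insert j1 T \<longrightarrow> y j = 0" and yC: "(\<lambda>j. y j - w j) \<in> gdrs_code d"
      using exist_sol[OF cS d2, of w] by blast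
    have "(y j1 - w j1 = -g1) \<longleftrightarrow> prod \<phi> T = -g2/g1"
    proof (rule H[OF yC])
      show "T \<inter> {j1, j2} = {}" using j1T j2T by auto
    next
      fix j assume "j \<notin> T" "j \<noteq> j1" "j \<noteq> j2" then show "y j - w j = 0" using y0 by (simp add: w_def)
    next
      show "y j2 - w j2 = -g2" using y0 j12 j2T by (simp add: w_def)
    qed (rule cT)
    then have yj1: "y j1 = -g1" using pT j12 by (simp add: g_def w_def)
    define x where "x = (\<lambda>j. if j \<in> T then y j else 0)"
    have xv: "(\<lambda>j. x j - v j) = (\<lambda>j. y j - w j)"
    proof
      fix j show "x j - v j = y j - w j"
        using y0 yj1 v1 v2 v0[of j] j1T j2T j12 by (cases "j = j1"; cases "j = j2"; auto simp: x_def w_def)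
    qed
    have xV: "(\<lambda>j. x j - v j) \<in> C" using yC xv by (simp add: C_def)
    have sT: "supp x \<subseteq> T" by (auto simp: supp_def x_def)
    have "\<not> card (supp x) < d - 2"
    proof
      assume "card (supp x) < d - 2"
      then have cl: "card (supp x \<union> {j1,j2}) < d"
        using card_Un_le[of "supp x" "{j1,j2}"] j12 by simp
      have "x j1 - v j1 = 0"
        by (rule min_dist[OF xV[unfolded C_def] _ cl d2]) (use v0 in \<open>auto simp: supp_def\<close>)
      then show False using j1T v1 g1 by (simp add: x_def)
    qed
    then have "supp x = T" using sT cT by (intro card_seteq) auto
    moreover have "x \<in> A" using xV \<open>supp x = T\<close> cT by (simp add: A_def memV hwt_supp)
    ultimately show ?thesis by blast
  qed
  have bj: "bij_betw (\<lambda>x. \<phi> ` supp x) A P"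
  proof (rule bij_betw_imageI)
    show "inj_on (\<lambda>x. \<phi> ` supp x) A"
    proof (rule inj_onI)
      fix x y assume x: "x \<in> A" and y: "y \<in> A" and e: "\<phi> ` supp x = \<phi> ` supp y"
      have "supp x = supp y"
        using inj_on_image_eq_iff[OF injphi] pa[OF x] pa[OF y] e by blast
      then show "x = y" using pb x y by blast
    qed
  next
    show "(\<lambda>x. \<phi> ` supp x) ` A = P"
    proof
      show "(\<lambda>x. \<phi> ` supp x) ` A \<subseteq> P"
      proof clarify
        fix x assume x: "x \<in> A"
        have s: "supp x \<subseteq> R" "card (supp x) = d-2" "prod \<phi> (supp x) = g" using pa[OF x] by auto
        have ij: "inj_on \<phi> (supp x)" using inj_on_subset[OF injphi s(1)] .
        show "\<phi> ` supp x \<in> P" unfolding P_def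
          using s imphi ij by (auto simp: card_image prod.reindex)
      qed
    next
      show "P \<subseteq> (\<lambda>x. \<phi> ` supp x) ` A"
      proof
        fix S assume S: "S \<in> P"
        define T where "T = {j \<in> R. \<phi> j \<in> S}"
        have TR: "T \<subseteq> R" by (auto simp: T_def)
        have ij: "inj_on \<phi> T" using inj_on_subset[OF injphi TR] .
        have im: "\<phi> ` T = S" using S imphi by (auto simp: T_def P_def)
        have cT: "card T = d-2" using S im card_image[OF ij] by (simp add: P_def)
        have pT: "prod \<phi> T = g" using S im prod.reindex[OF ij, of id] by (simp add: P_def)
        obtain x where "x \<in> A" "supp x = T" using pc[OF TR cT pT] by blast
        then show "S \<in> (\<lambda>x. \<phi> ` supp x) ` A" using im by blast
      qed
    qed
  qed
  have "card A = card P" using bij_betw_same_card[OF bj] .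
  then show ?thesis by (simp add: B_count_def P_times_def A_def V_def v_def C_def P_def g_def)
qed

lemma prod_opt:
  fixes \<phi> :: "('b::finite) option \<Rightarrow> 'a::comm_monoid_mult"
  assumes "\<phi> None = 1"
  shows "prod \<phi> T = (\<Prod>m\<in>{m. Some m \<in> T}. \<phi> (Some m))"
proof -
  have "prod \<phi> (Some ` {m. Some m \<in> T}) = prod \<phi> T"
  proof (rule prod.mono_neutral_left)
    show "\<forall>i\<in>T - Some ` {m. Some m \<in> T}. \<phi> i = 1"
    proof
      fix i assume i: "i \<in> T - Some ` {m. Some m \<in> T}"
      show "\<phi> i = 1"
      proof (cases i)
        case None then show ?thesis using assms by simp
      next
        case (Some m) then show ?thesis using i by auto
      qed
    qed
  qed auto
  moreover have "prod \<phi> (Some ` {m. Some m \<in> T}) = (\<Prod>m\<in>{m. Some m \<in> T}. \<phi> (Some m))"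
    by (subst prod.reindex) auto
  ultimately show ?thesis by simp
qed

lemma bij_from_card:
  fixes \<phi> :: "'b \<Rightarrow> 'a::{finite,zero}"
  assumes "inj_on \<phi> R" "\<And>j. j \<in> R \<Longrightarrow> \<phi> j \<noteq> 0" "card R = CARD('a) - 1" "finite R"
  shows "bij_betw \<phi> R {x. x \<noteq> 0}"
proof -
  have c0: "card {x::'a. x \<noteq> 0} = CARD('a) - 1"
  proof -
    have "{x::'a. x \<noteq> 0} = UNIV - {0}" by auto
    then show ?thesis by (simp add: card_Diff_singleton)
  qed
  have "\<phi> ` R = {x. x \<noteq> 0}"
    using assms c0 by (intro card_subset_eq) (auto simp: card_image)
  then show ?thesis using assms(1) by (simp add: bij_betw_def)
qed

lemma card_R2:
  assumes "j1 \<noteq> j2"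
  shows "card (UNIV - {j1, j2::('a::finite) option}) = CARD('a) - 1"
  using assms by (simp add: card_Diff_subset)

lemma ratio_SS:
  fixes c :: "('a::{finite,field}) vec"
  assumes C: "c \<in> gdrs_code d" and cT: "card T = d - 2" and aT: "Some a \<notin> T" and bT: "Some b \<notin> T"
    and ab: "a \<noteq> b" and sup: "\<And>j. j \<notin> T \<Longrightarrow> j \<noteq> Some a \<Longrightarrow> j \<noteq> Some b \<Longrightarrow> c j = 0" and d2: "d \<ge> 2"
  shows "c (Some a) * (\<Prod>k\<in>{m. Some m \<in> T}. a - k) + c (Some b) * (\<Prod>k\<in>{m. Some m \<in> T}. b - k) = 0"
proof -
  define Tf where "Tf = {m. Some m \<in> T}"
  define f where "f = (\<Prod>k\<in>Tf. [:-k,1:])"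
  have cf: "card Tf + (if None \<in> T then 1 else 0) = card T" unfolding Tf_def by (rule card_fin_part) simp
  have degf: "degree f = card Tf" using monic_prod[of Tf] by (simp add: f_def)
  have "degree f \<le> d - 2" using degf cf cT by auto
  from test_poly[OF C this d2]
  have Tst: "(\<Sum>m\<in>UNIV. c (Some m) * poly f m) + coeff f (d-2) * c None = 0" .
  have z1: "coeff f (d-2) * c None = 0"
  proof (cases "None \<in> T")
    case True
    then have "degree f < d - 2" using degf cf cT by auto
    then show ?thesis by (simp add: coeff_eq_0)
  next
    case False then show ?thesis using sup by simp
  qed
  have "(\<Sum>m\<in>UNIV. c (Some m) * poly f m) = (\<Sum>m\<in>{a,b}. c (Some m) * poly f m)"
  proof (rule sum.mono_neutral_right)
    show "\<forall>m\<in>UNIV - {a, b}. c (Some m) * poly f m = 0"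
    proof
      fix m assume "m \<in> UNIV - {a,b}"
      then show "c (Some m) * poly f m = 0"
        using sup[of "Some m"] poly_lin_prod0[of Tf m] by (auto simp: f_def Tf_def)
    qed
  qed auto
  moreover have "(\<Sum>m\<in>UNIV. c (Some m) * poly f m) = 0" using Tst z1 by (metis add.right_neutral)
  ultimately show ?thesis using ab by (simp add: f_def poly_lin_prod Tf_def)
qed

lemma ratio_SN:
  fixes c :: "('a::{finite,field}) vec"
  assumes C: "c \<in> gdrs_code d" and cT: "card T = d - 2" and aT: "Some a \<notin> T" and nT: "None \<notin> T"
    and sup: "\<And>j. j \<notin> T \<Longrightarrow> j \<noteq> Some a \<Longrightarrow> j \<noteq> None \<Longrightarrow> c j = 0" and d2: "d \<ge> 2"
  shows "c (Some a) * (\<Prod>k\<in>{m. Some m \<in> T}. a - k) + c None = 0"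
proof -
  define Tf where "Tf = {m. Some m \<in> T}"
  define f where "f = (\<Prod>k\<in>Tf. [:-k,1:])"
  have cf: "card Tf + (if None \<in> T then 1 else 0) = card T" unfolding Tf_def by (rule card_fin_part) simp
  have degf: "degree f = d - 2" and cf1: "coeff f (d-2) = 1"
    using monic_prod[of Tf] cf cT nT by (auto simp: f_def)
  from test_poly[OF C _ d2, of f] degf
  have Tst: "(\<Sum>m\<in>UNIV. c (Some m) * poly f m) + coeff f (d-2) * c None = 0" by simp
  have "(\<Sum>m\<in>UNIV. c (Some m) * poly f m) = c (Some a) * poly f a"
  proof (rule sum_single_UNIV)
    fix m assume "m \<noteq> a"
    then show "c (Some m) * poly f m = 0"
      using sup[of "Some m"] poly_lin_prod0[of Tf m] by (auto simp: f_def Tf_def)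
  qed
  then show ?thesis using Tst cf1 by (simp add: f_def poly_lin_prod Tf_def)
qed

lemma prodP_ne0: "Some a \<notin> T \<Longrightarrow> (\<Prod>k\<in>{m. Some m \<in> T}. (a::'a::{finite,field}) - k) \<noteq> 0"
  by (subst prod_zero_iff) auto

lemma case_SS:
  fixes g1 g2 a b :: "'a::{finite,field}"
  assumes d5: "5 \<le> d" and ab: "a \<noteq> b" and g1: "g1 \<noteq> 0" and g2: "g2 \<noteq> 0"
  shows "B_count (d-2) (coset (vec2 (Some a) (Some b) g1 g2) (gdrs_code d)) = P_times (d-2) (-g2/g1)"
proof (rule general[where \<phi> = "\<lambda>j. case j of None \<Rightarrow> 1 | Some m \<Rightarrow> (a-m)/(b-m)"])
  show "bij_betw (\<lambda>j. case j of None \<Rightarrow> 1 | Some m \<Rightarrow> (a-m)/(b-m)) (UNIV - {Some a, Some b}) {x. x \<noteq> 0}"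
  proof (rule bij_from_card)
    show "inj_on (\<lambda>j. case j of None \<Rightarrow> 1 | Some m \<Rightarrow> (a-m)/(b-m)) (UNIV - {Some a, Some b})"
    proof (rule inj_onI)
      fix x y assume x: "x \<in> UNIV - {Some a, Some b}" and y: "y \<in> UNIV - {Some a, Some b}"
        and e: "(case x of None \<Rightarrow> 1 | Some m \<Rightarrow> (a-m)/(b-m)) = (case y of None \<Rightarrow> 1 | Some m \<Rightarrow> (a-m)/(b-m))"
      show "x = y"
      proof (cases x; cases y)
        fix m m' assume xm: "x = Some m" and ym: "y = Some m'"
        have bm: "b - m \<noteq> 0" "b - m' \<noteq> 0" using x y xm ym by auto
        have "(a-m)*(b-m') = (a-m')*(b-m)" using e xm ym bm by (simp add: field_simps)
        moreover have "(a - b) * (m - m') = (a-m)*(b-m') - (a-m')*(b-m)" by (simp add: algebra_simps)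
        ultimately have "(a - b) * (m - m') = 0" by simp
        then show "x = y" using ab xm ym by simp
      next
        fix m assume xm: "x = Some m" and "y = None"
        then have "(a-m)/(b-m) = 1" "b - m \<noteq> 0" using e x by auto
        then have "a - m = b - m" by (simp add: field_simps)
        then show "x = y" using ab by simp
      next
        fix m assume ym: "y = Some m" and "x = None"
        then have "(a-m)/(b-m) = 1" "b - m \<noteq> 0" using e y by auto
        then have "a - m = b - m" by (simp add: field_simps)
        then show "x = y" using ab by simp
      qed simp
    qed
  next
    fix j assume "j \<in> UNIV - {Some a, Some b}"
    then show "(case j of None \<Rightarrow> 1 | Some m \<Rightarrow> (a-m)/(b-m)) \<noteq> (0::'a)" by (cases j) auto
  qed (use ab card_R2 in auto)
next
  fix c :: "'a vec" and T
  assume C: "c \<in> gdrs_code d" and disj: "T \<inter> {Some a, Some b} = {}" and cT: "card T = d - 2"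
    and sup: "\<And>j. j \<notin> T \<Longrightarrow> j \<noteq> Some a \<Longrightarrow> j \<noteq> Some b \<Longrightarrow> c j = 0" and cb: "c (Some b) = - g2"
  define Pa where "Pa = (\<Prod>k\<in>{m. Some m \<in> T}. a - k)"
  define Pb where "Pb = (\<Prod>k\<in>{m. Some m \<in> T}. b - k)"
  have aT: "Some a \<notin> T" and bT: "Some b \<notin> T" using disj by auto
  have r: "c (Some a) * Pa + c (Some b) * Pb = 0"
    unfolding Pa_def Pb_def by (rule ratio_SS[OF C cT aT bT ab sup]) (use d5 in auto)
  have pa0: "Pa \<noteq> 0" and pb0: "Pb \<noteq> 0" unfolding Pa_def Pb_def using prodP_ne0 aT bT by auto
  have "prod (\<lambda>j. case j of None \<Rightarrow> 1 | Some m \<Rightarrow> (a-m)/(b-m)) T = (\<Prod>m\<in>{m. Some m \<in> T}. (a-m)/(b-m))"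
    by (subst prod_opt) auto
  also have "\<dots> = Pa / Pb" unfolding Pa_def Pb_def by (rule prod_dividef)
  finally have pp: "prod (\<lambda>j. case j of None \<Rightarrow> 1 | Some m \<Rightarrow> (a-m)/(b-m)) T = Pa / Pb" .
  have "c (Some a) = - g1 \<longleftrightarrow> Pa / Pb = - g2 / g1"
  proof
    assume "c (Some a) = - g1"
    then show "Pa / Pb = - g2 / g1" using r cb pb0 g1 by (simp add: field_simps) (metis add.inverse_inverse minus_mult_left mult.commute neg_eq_iff_add_eq_0)
  next
    assume "Pa / Pb = - g2 / g1"
    then have "Pa * g1 = - g2 * Pb" using pb0 g1 by (simp add: field_simps)
    then have "c (Some a) * Pa = - g1 * Pa" using r cb by (simp add: algebra_simps)
    then show "c (Some a) = - g1" using pa0 by (metis minus_mult_left mult_cancel_right)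
  qed
  then show "c (Some a) = - g1 \<longleftrightarrow> prod (\<lambda>j. case j of None \<Rightarrow> 1 | Some m \<Rightarrow> (a-m)/(b-m)) T = - g2 / g1"
    using pp by simp
qed (use assms in auto)

lemma case_SN:
  fixes g1 g2 a :: "'a::{finite,field}"
  assumes d5: "5 \<le> d" and g1: "g1 \<noteq> 0" and g2: "g2 \<noteq> 0"
  shows "B_count (d-2) (coset (vec2 (Some a) None g1 g2) (gdrs_code d)) = P_times (d-2) (-g2/g1)"
proof (rule general[where \<phi> = "\<lambda>j. case j of None \<Rightarrow> 1 | Some m \<Rightarrow> a - m"])
  show "bij_betw (\<lambda>j. case j of None \<Rightarrow> 1 | Some m \<Rightarrow> a - m) (UNIV - {Some a, None}) {x. x \<noteq> 0}"
  proof (rule bij_from_card)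
    show "inj_on (\<lambda>j. case j of None \<Rightarrow> 1 | Some m \<Rightarrow> a - m) (UNIV - {Some a, None})"
    proof (rule inj_onI)
      fix x y assume x: "x \<in> UNIV - {Some a, None}" and y: "y \<in> UNIV - {Some a, None}"
        and e: "(case x of None \<Rightarrow> 1 | Some m \<Rightarrow> a - m) = (case y of None \<Rightarrow> 1 | Some m \<Rightarrow> a - m)"
      then show "x = y" by (cases x; cases y) auto
    qed
  next
    fix j assume "j \<in> UNIV - {Some a, None}"
    then show "(case j of None \<Rightarrow> 1 | Some m \<Rightarrow> a - m) \<noteq> (0::'a)" by (cases j) auto
  qed (use card_R2 in auto)
next
  fix c :: "'a vec" and T
  assume C: "c \<in> gdrs_code d" and disj: "T \<inter> {Some a, None} = {}" and cT: "card T = d - 2"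
    and sup: "\<And>j. j \<notin> T \<Longrightarrow> j \<noteq> Some a \<Longrightarrow> j \<noteq> None \<Longrightarrow> c j = 0" and cb: "c None = - g2"
  define Pa where "Pa = (\<Prod>k\<in>{m. Some m \<in> T}. a - k)"
  have aT: "Some a \<notin> T" and nT: "None \<notin> T" using disj by auto
  have r: "c (Some a) * Pa + c None = 0"
    unfolding Pa_def by (rule ratio_SN[OF C cT aT nT sup]) (use d5 in auto)
  have pa0: "Pa \<noteq> 0" unfolding Pa_def using prodP_ne0 aT by auto
  have pp: "prod (\<lambda>j. case j of None \<Rightarrow> 1 | Some m \<Rightarrow> a - m) T = Pa"
    unfolding Pa_def by (subst prod_opt) auto
  have "c (Some a) = - g1 \<longleftrightarrow> Pa = - g2 / g1"
  proof
    assume "c (Some a) = - g1"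
    then show "Pa = - g2 / g1" using r cb g1 by (simp add: field_simps)
  next
    assume "Pa = - g2 / g1"
    then have "Pa * g1 = - g2" using g1 by (simp add: field_simps)
    then have "c (Some a) * Pa = - g1 * Pa" using r cb by (simp add: algebra_simps)
    then show "c (Some a) = - g1" using pa0 by (metis minus_mult_left mult_cancel_right)
  qed
  then show "c (Some a) = - g1 \<longleftrightarrow> prod (\<lambda>j. case j of None \<Rightarrow> 1 | Some m \<Rightarrow> a - m) T = - g2 / g1"
    using pp by simp
qed (use assms in auto)

lemma case_NS:
  fixes g1 g2 b :: "'a::{finite,field}"
  assumes d5: "5 \<le> d" and g1: "g1 \<noteq> 0" and g2: "g2 \<noteq> 0"
  shows "B_count (d-2) (coset (vec2 None (Some b) g1 g2) (gdrs_code d)) = P_times (d-2) (-g2/g1)"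
proof (rule general[where \<phi> = "\<lambda>j. case j of None \<Rightarrow> 1 | Some m \<Rightarrow> inverse (b - m)"])
  show "bij_betw (\<lambda>j. case j of None \<Rightarrow> 1 | Some m \<Rightarrow> inverse (b - m)) (UNIV - {None, Some b}) {x. x \<noteq> 0}"
  proof (rule bij_from_card)
    show "inj_on (\<lambda>j. case j of None \<Rightarrow> 1 | Some m \<Rightarrow> inverse (b - m)) (UNIV - {None, Some b})"
    proof (rule inj_onI)
      fix x y assume x: "x \<in> UNIV - {None, Some b}" and y: "y \<in> UNIV - {None, Some b}"
        and e: "(case x of None \<Rightarrow> 1 | Some m \<Rightarrow> inverse (b - m)) = (case y of None \<Rightarrow> 1 | Some m \<Rightarrow> inverse (b - m))"
      then show "x = y" by (cases x; cases y) auto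
    qed
  next
    fix j assume "j \<in> UNIV - {None, Some b}"
    then show "(case j of None \<Rightarrow> 1 | Some m \<Rightarrow> inverse (b - m)) \<noteq> (0::'a)" by (cases j) auto
  qed (use card_R2 in auto)
next
  fix c :: "'a vec" and T
  assume C: "c \<in> gdrs_code d" and disj: "T \<inter> {None, Some b} = {}" and cT: "card T = d - 2"
    and sup: "\<And>j. j \<notin> T \<Longrightarrow> j \<noteq> None \<Longrightarrow> j \<noteq> Some b \<Longrightarrow> c j = 0" and cb: "c (Some b) = - g2"
  define Pb where "Pb = (\<Prod>k\<in>{m. Some m \<in> T}. b - k)"
  have bT: "Some b \<notin> T" and nT: "None \<notin> T" using disj by auto
  have r: "c (Some b) * Pb + c None = 0"
    unfolding Pb_def by (rule ratio_SN[OF C cT bT nT]) (use sup d5 in auto)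
  have pb0: "Pb \<noteq> 0" unfolding Pb_def using prodP_ne0 bT by auto
  have "prod (\<lambda>j. case j of None \<Rightarrow> 1 | Some m \<Rightarrow> inverse (b - m)) T = (\<Prod>m\<in>{m. Some m \<in> T}. inverse (b - m))"
    by (subst prod_opt) auto
  also have "\<dots> = inverse Pb" unfolding Pb_def using prod_inversef[of "\<lambda>m. b - m"] by (simp add: o_def)
  finally have pp: "prod (\<lambda>j. case j of None \<Rightarrow> 1 | Some m \<Rightarrow> inverse (b - m)) T = inverse Pb" .
  have "c None = - g1 \<longleftrightarrow> inverse Pb = - g2 / g1"
  proof
    assume "c None = - g1"
    then have "g2 * Pb = - g1" using r cb by (simp add: algebra_simps)
    then show "inverse Pb = - g2 / g1" using pb0 g1 by (simp add: field_simps)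
  next
    assume "inverse Pb = - g2 / g1"
    then have "g2 * Pb = - g1" using pb0 g1 g2 by (simp add: field_simps)
    then show "c None = - g1" using r cb by (simp add: algebra_simps) (metis add.commute add_diff_cancel_right' diff_0)
  qed
  then show "c None = - g1 \<longleftrightarrow> prod (\<lambda>j. case j of None \<Rightarrow> 1 | Some m \<Rightarrow> inverse (b - m)) T = - g2 / g1"
    using pp by simp
qed (use assms in auto)

theorem theorem3p4:
  fixes g1 g2 :: "'a::{finite,field}" and j1 j2 :: "'a option" and d :: nat
  assumes "5 \<le> d" and "d \<le> card (UNIV :: 'a set)"
    and "j1 \<noteq> j2" and "g1 \<noteq> 0" and "g2 \<noteq> 0"
    and "coset_weight (coset (vec2 j1 j2 g1 g2) (gdrs_code d)) = 2"
  shows "B_count (d - 2) (coset (vec2 j1 j2 g1 g2) (gdrs_code d)) = P_times (d - 2) (- g2 / g1)"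
proof (cases j1; cases j2)
  fix a b assume "j1 = Some a" "j2 = Some b"
  then show ?thesis using case_SS[of d a b g1 g2] assms by simp
next
  fix a assume "j1 = Some a" "j2 = None"
  then show ?thesis using case_SN[of d g1 g2 a] assms by simp
next
  fix b assume "j1 = None" "j2 = Some b"
  then show ?thesis using case_NS[of d g1 g2 b] assms by simp
qed (use assms in simp)

end
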